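(* Let $(W_1,w_2,\lambda)$ be a KKT point (in terms of the B-subdifferential) of the non-convex max-margin problem $\min\frac12(\|W_1\|_F^2+\|w_2\|_2^2)$ s.t. $Y(XW_1)_+w_2\ge\mathbf1$. Then $(W_1,w_2,\lambda)$ yields a KKT point of the convex problem (i.e., there exist $u_j,u'_j\in\mathbb R^d$, $j\in[p]$, with $\sum_jD_jX(u'_j-u_j)=(XW_1)_+w_2$, and $z_j,z'_j\in\mathbb R^N$, which together with $\lambda$ satisfy the convex KKT conditions in the context) if and only if $\lambda$ is dual feasible: $$\max_{u:\|u\|_2\le1}|\lambda^T(Xu)_+|\le1.$$ Moreover, this dual feasibility condition is equivalent to: for every $D_j\in\mathcal P$, $$\max_{\|u\|_2\le1,\ (2D_j-I)Xu\ge0}|\lambda^TD_jXu|\le1.$$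
   Context: Binary setting: $X\in\mathbb R^{N\times d}$ rows $x_n$, $y\in\{\pm1\}^N$, $Y=\mathrm{diag}(y)$, network output $(XW_1)_+w_2$, $\mathcal P=\{\mathrm{diag}(\mathbb I(Xw\ge0)):w\in\mathbb R^d\}=\{D_1,\dots,D_p\}$. KKT point of the non-convex problem (B-subdifferential): $Y\lambda\ge0$, $Y(XW_1)_+w_2\ge\mathbf 1$, $\lambda_n(y_n(x_n^TW_1)_+w_2-1)=0$, $w_2=(XW_1)_+^T\lambda$, and for each $i$, $w_{1,i}=w_{2,i}\sum_n\lambda_ng_{n,i}x_n$ with $g_{n,i}=1$ if $x_n^Tw_{1,i}>0$, $0$ if $<0$, $\in\{0,1\}$ if $=0$. Convex problem: $\min\sum_{j=1}^p(\|u_j\|_2+\|u'_j\|_2)$ s.t. $Y\sum_jD_jX(u'_j-u_j)\ge\mathbf1$, $(2D_j-I)Xu_j\ge0$, $(2D_j-I)Xu'_j\ge0$. Its KKT conditions, with multipliers $\lambda$ ($Y\lambda\ge0$) and $z_j,z'_j\ge0$: primal feasibility; $X^TD_j\lambda+X^T(2D_j-I)z'_j\in\partial\|u'_j\|_2$ and $-X^TD_j\lambda+X^T(2D_j-I)z_j\in\partial\|u_j\|_2$ for all $j$; $\lambda_n\big(y_n(\sum_jD_jX(u'_j-u_j))_n-1\big)=0$; $z_{j,n}((2D_j-I)Xu_j)_n=0$ and $z'_{j,n}((2D_j-I)Xu'_j)_n=0$ for all $j,n$. *)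

theory Defs
  imports "HOL-Analysis.Analysis"
begin

text \<open>Dimensions are finite index types: 'n samples (N), 'd features (d), 'm hidden neurons.
  X :: real^'d^'n has rows x_n = X$n; W1 :: real^'m^'d; w2 :: real^'m; y, lambda :: real^'n.\<close>

definition diag_mat :: "real^'n \<Rightarrow> real^'n^'n" where
  "diag_mat v = (\<chi> i j. if i = j then v $ i else 0)"

definition relu_mat :: "real^'m^'n \<Rightarrow> real^'m^'n" where
  "relu_mat A = (\<chi> i j. max 0 (A $ i $ j))"

definition relu_vec :: "real^'n \<Rightarrow> real^'n" where
  "relu_vec v = (\<chi> i. max 0 (v $ i))"

definition arrangements :: "real^'d^'n \<Rightarrow> (real^'n^'n) set" where
  "arrangements X = {diag_mat (\<chi> n. if (X *v w) $ n \<ge> 0 then 1 else 0) | w. True}"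

definition subdiff :: "('a::real_inner \<Rightarrow> real) \<Rightarrow> 'a \<Rightarrow> 'a set" where
  "subdiff f x = {g. \<forall>z. f z \<ge> f x + g \<bullet> (z - x)}"

text \<open>KKT point (B-subdifferential) of the non-convex max-margin problem
  min 1/2(||W1||_F^2 + ||w2||^2) s.t. Y (X W1)_+ w2 >= 1.\<close>
definition nonconvex_KKT ::
  "real^'d^'n \<Rightarrow> real^'n \<Rightarrow> real^'m^'d \<Rightarrow> real^'m \<Rightarrow> real^'n \<Rightarrow> bool" where
  "nonconvex_KKT X y W1 w2 lam \<longleftrightarrow>
     (\<forall>n. (diag_mat y *v lam) $ n \<ge> 0)
   \<and> (\<forall>n. (diag_mat y *v (relu_mat (X ** W1) *v w2)) $ n \<ge> 1)
   \<and> (\<forall>n. lam $ n * (y $ n * ((relu_mat (X ** W1)) $ n \<bullet> w2) - 1) = 0)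
   \<and> w2 = transpose (relu_mat (X ** W1)) *v lam
   \<and> (\<forall>i. \<exists>g :: 'n \<Rightarrow> real.
          (\<forall>n. (X $ n \<bullet> column i W1 > 0 \<longrightarrow> g n = 1)
             \<and> (X $ n \<bullet> column i W1 < 0 \<longrightarrow> g n = 0)
             \<and> (X $ n \<bullet> column i W1 = 0 \<longrightarrow> g n \<in> {0, 1}))
        \<and> column i W1 = w2 $ i *\<^sub>R (\<Sum>n\<in>UNIV. (lam $ n * g n) *\<^sub>R X $ n))"

text \<open>KKT conditions of the convex problem
  min sum_j (||u_j|| + ||u'_j||) s.t. Y sum_j D_j X (u'_j - u_j) >= 1,
  (2D_j - I) X u_j >= 0, (2D_j - I) X u'_j >= 0, with the index j ranging over
  the (distinct) matrices D_j of P, multipliers lam (Y lam >= 0) and z_j, z'_j >= 0.\<close>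
definition convex_KKT ::
  "real^'d^'n \<Rightarrow> real^'n \<Rightarrow> (real^'n^'n \<Rightarrow> real^'d) \<Rightarrow> (real^'n^'n \<Rightarrow> real^'d)
   \<Rightarrow> (real^'n^'n \<Rightarrow> real^'n) \<Rightarrow> (real^'n^'n \<Rightarrow> real^'n) \<Rightarrow> real^'n \<Rightarrow> bool" where
  "convex_KKT X y u u' z z' lam \<longleftrightarrow>
     (let P = arrangements X;
          out = (\<Sum>D\<in>P. (D ** X) *v (u' D - u D)) in
       (\<forall>n. (diag_mat y *v out) $ n \<ge> 1)
     \<and> (\<forall>D\<in>P. \<forall>n. (((2::real) *\<^sub>R D - mat 1) ** X *v u D) $ n \<ge> 0)
     \<and> (\<forall>D\<in>P. \<forall>n. (((2::real) *\<^sub>R D - mat 1) ** X *v u' D) $ n \<ge> 0)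
     \<and> (\<forall>n. (diag_mat y *v lam) $ n \<ge> 0)
     \<and> (\<forall>D\<in>P. \<forall>n. z D $ n \<ge> 0 \<and> z' D $ n \<ge> 0)
     \<and> (\<forall>D\<in>P. transpose X *v (D *v lam) + transpose X *v (((2::real) *\<^sub>R D - mat 1) *v z' D)
                 \<in> subdiff norm (u' D))
     \<and> (\<forall>D\<in>P. - (transpose X *v (D *v lam)) + transpose X *v (((2::real) *\<^sub>R D - mat 1) *v z D)
                 \<in> subdiff norm (u D))
     \<and> (\<forall>n. lam $ n * (y $ n * out $ n - 1) = 0)
     \<and> (\<forall>D\<in>P. \<forall>n. z D $ n * ((((2::real) *\<^sub>R D - mat 1) ** X *v u D) $ n) = 0)
     \<and> (\<forall>D\<in>P. \<forall>n. z' D $ n * ((((2::real) *\<^sub>R D - mat 1) ** X *v u' D) $ n) = 0))"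

end

theory Submission
  imports Defs
begin




lemma transpose_dot: "(transpose (A::real^'d^'n) *v v) \<bullet> r = v \<bullet> (A *v r)"
  by (simp add: dot_lmul_matrix)

lemma cone_dual:
  fixes A :: "real^'d^'n" and c :: "real^'d"
  assumes H: "\<And>u. norm u \<le> 1 \<Longrightarrow> (\<forall>n. (A *v u)$n \<ge> 0) \<Longrightarrow> c \<bullet> u \<le> 1"
  shows "\<exists>z. (\<forall>n. z$n \<ge> 0) \<and> norm (c + transpose A *v z) \<le> 1"
proof -
  define K where "K = (\<lambda>z. transpose A *v z) ` {z. \<forall>n. 0 \<le> z$n}"
  define S where "S = range (\<lambda>n. transpose A *v axis n (1::real))"
  have fS: "finite S" unfolding S_def by simp
  have cK: "convex_cone K"
    unfolding convex_cone_iff K_def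
  proof (intro conjI ballI allI impI)
    show "0 \<in> (\<lambda>z. transpose A *v z) ` {z. \<forall>n. 0 \<le> z $ n}"
      by (rule image_eqI[of _ _ 0]) auto
  next
    fix x y assume "x \<in> (\<lambda>z. transpose A *v z) ` {z. \<forall>n. 0 \<le> z $ n}"
      "y \<in> (\<lambda>z. transpose A *v z) ` {z. \<forall>n. 0 \<le> z $ n}"
    then obtain a b where "x = transpose A *v a" "y = transpose A *v b" "\<forall>n. 0 \<le> a$n" "\<forall>n. 0 \<le> b$n"
      by auto
    then show "x + y \<in> (\<lambda>z. transpose A *v z) ` {z. \<forall>n. 0 \<le> z $ n}"
      by (intro image_eqI[of _ _ "a+b"]) (auto simp: matrix_vector_right_distrib)
  next
    fix x and d::real assume "x \<in> (\<lambda>z. transpose A *v z) ` {z. \<forall>n. 0 \<le> z $ n}" "0 \<le> d"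
    then obtain a where "x = transpose A *v a" "\<forall>n. 0 \<le> a$n"
      by auto
    then show "d *\<^sub>R x \<in> (\<lambda>z. transpose A *v z) ` {z. \<forall>n. 0 \<le> z $ n}"
      using \<open>0 \<le> d\<close> by (intro image_eqI[of _ _ "d *\<^sub>R a"]) (auto simp: matrix_vector_mult_scaleR)
  qed
  have SK: "S \<subseteq> K" unfolding S_def K_def by (auto simp: axis_def)
  have HK: "convex_cone hull S \<subseteq> K" using hull_minimal[of S K convex_cone] SK cK by blast
  define Hs where "Hs = convex_cone hull S"
  have clH: "closed Hs" unfolding Hs_def by (rule closed_convex_cone_hull[OF fS])
  have cvH: "convex_cone Hs" unfolding Hs_def by (rule convex_cone_convex_cone_hull)
  have neH: "Hs \<noteq> {}" using cvH convex_cone_nonempty by blast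
  define k0 where "k0 = closest_point Hs (- c)"
  have k0H: "k0 \<in> Hs" unfolding k0_def by (rule closest_point_in_set[OF clH neH])
  have k0min: "\<forall>y\<in>Hs. dist (-c) k0 \<le> dist (-c) y"
    unfolding k0_def using closest_point_exists(2)[OF clH neH] by blast
  have dot: "(- c - k0) \<bullet> (y - k0) \<le> 0" if "y \<in> Hs" for y
    by (rule any_closest_point_dot[OF _ clH k0H that k0min]) (use cvH in \<open>simp add: convex_cone_def\<close>)
  define r where "r = c + k0"
  have negr: "- c - k0 = - r" unfolding r_def by simp
  have dot': "r \<bullet> k0 \<le> r \<bullet> y" if "y \<in> Hs" for y
  proof -
    have "(- r) \<bullet> (y - k0) \<le> 0" using dot[OF that] negr by simp
    then show ?thesis by (simp add: inner_diff_right)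
  qed
  have "0 \<in> Hs" using cvH convex_cone_iff by blast
  from dot'[OF this] have r1: "r \<bullet> k0 \<le> 0" by simp
  have "2 *\<^sub>R k0 \<in> Hs" by (rule convex_cone_scaleR[OF cvH _ k0H]) simp
  from dot'[OF this] have r2: "r \<bullet> k0 \<ge> 0" by simp
  have rS: "r \<bullet> y \<ge> 0" if "y \<in> S" for y
  proof -
    have "y \<in> Hs" unfolding Hs_def by (rule hull_inc[OF that])
    from dot'[OF this] r1 r2 show ?thesis by linarith
  qed
  have Ar: "(A *v r)$n \<ge> 0" for n
  proof -
    have "r \<bullet> (transpose A *v axis n 1) \<ge> 0" using rS unfolding S_def by auto
    also have "r \<bullet> (transpose A *v axis n 1) = (A *v r)$n"
      by (metis inner_commute transpose_dot inner_axis' inner_real_def mult_1)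
    finally show ?thesis .
  qed
  have cr: "c \<bullet> r = r \<bullet> r"
  proof -
    have "c = r - k0" unfolding r_def by simp
    then have "c \<bullet> r = r \<bullet> r - k0 \<bullet> r" by (simp add: inner_diff_left)
    moreover have "k0 \<bullet> r = r \<bullet> k0" by (rule inner_commute)
    ultimately show ?thesis using r1 r2 by linarith
  qed
  have nr: "norm r \<le> 1"
  proof (cases "r = 0")
    case False
    then have np: "norm r > 0" by simp
    have "c \<bullet> (r /\<^sub>R norm r) \<le> 1"
      using Ar np by (intro H) (auto simp: matrix_vector_mult_scaleR)
    also have "c \<bullet> (r /\<^sub>R norm r) = norm r"
      using cr np by (simp add: power2_norm_eq_inner[symmetric] power2_eq_square)
    finally show ?thesis .
  qed simp
  from HK k0H obtain z0 where "k0 = transpose A *v z0" "\<forall>n. 0 \<le> z0$n"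
    unfolding Hs_def K_def by auto
  then show ?thesis using nr unfolding r_def by blast
qed




lemma ifz: "((if P then a else 0) * (c::real)) = (if P then a * c else 0)" by simp
lemma diag_mult: "diag_mat v *v x = (\<chi> n. v$n * x$n)"
  unfolding diag_mat_def matrix_vector_mult_def vec_eq_iff by (simp add: ifz)
lemma twoD_mult: "((2::real) *\<^sub>R diag_mat v - mat 1) *v x = (\<chi> n. (2 * v$n - 1) * x$n)"
proof -
  have "((2::real) *\<^sub>R diag_mat v - mat 1) *v x = 2 *\<^sub>R (diag_mat v *v x) - x"
    by (simp add: algebra_simps matrix_vector_mult_diff_rdistrib scaleR_matrix_vector_assoc)
  then show ?thesis by (simp add: diag_mult vec_eq_iff algebra_simps)
qed
lemma transpose_diag: "transpose (diag_mat v) = diag_mat v"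
  by (simp add: diag_mat_def transpose_def vec_eq_iff)
lemma transpose_twoD: "transpose ((2::real) *\<^sub>R diag_mat v - mat 1) = (2::real) *\<^sub>R diag_mat v - mat 1"
  by (simp add: diag_mat_def transpose_def vec_eq_iff mat_def)

lemma sym_dot:
  assumes "transpose B = B"
  shows "(transpose (X::real^'d^'n) *v (B *v z)) \<bullet> u = z \<bullet> ((B ** X) *v u)"
proof -
  have "(transpose X *v (B *v z)) \<bullet> u = (B *v z) \<bullet> (X *v u)" by (rule transpose_dot)
  also have "\<dots> = (transpose (transpose B) *v z) \<bullet> (X *v u)" by simp
  also have "\<dots> = z \<bullet> (transpose B *v (X *v u))" by (rule transpose_dot)
  also have "\<dots> = z \<bullet> ((B ** X) *v u)" using assms by (simp add: matrix_vector_mul_assoc)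
  finally show ?thesis .
qed

lemma arr_elem: "D \<in> arrangements X \<Longrightarrow> \<exists>v. D = diag_mat v \<and> (\<forall>n. v$n = 0 \<or> v$n = 1)"
proof -
  assume "D \<in> arrangements X"
  then obtain w where "D = diag_mat (\<chi> n. if (X *v w) $ n \<ge> 0 then 1 else 0)"
    unfolding arrangements_def by auto
  then show ?thesis by (intro exI[of _ "(\<chi> n. if (X *v w) $ n \<ge> 0 then 1 else (0::real))"]) auto
qed

lemma arr_finite: "finite (arrangements (X::real^'d^'n))"
proof -
  have "arrangements X \<subseteq> range (\<lambda>S::'n set. diag_mat (\<chi> n. if n \<in> S then 1 else 0))"
  proof
    fix D assume "D \<in> arrangements X"
    then obtain w where "D = diag_mat (\<chi> n. if (X *v w) $ n \<ge> 0 then 1 else 0)"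
      unfolding arrangements_def by auto
    then show "D \<in> range (\<lambda>S::'n set. diag_mat (\<chi> n. if n \<in> S then 1 else 0))"
      by (intro image_eqI[of _ _ "{n. (X *v w) $ n \<ge> 0}"]) auto
  qed
  then show ?thesis by (rule finite_subset) simp
qed

lemma pattern_in_arr: "diag_mat (\<chi> n. if (X *v w) $ n \<ge> 0 then 1 else 0) \<in> arrangements X"
  unfolding arrangements_def by blast

lemma cone_relu:
  assumes "\<forall>n. v$n = 0 \<or> v$n = 1"
    and "\<forall>n. (((2::real) *\<^sub>R diag_mat v - mat 1) ** X *v u) $ n \<ge> 0"
  shows "(diag_mat v ** X) *v u = relu_vec (X *v u)"
proof -
  have h: "(2 * v$n - 1) * (X *v u)$n \<ge> 0" for n
    using assms(2)[rule_format, of n] by (simp add: matrix_vector_mul_assoc[symmetric] twoD_mult)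
  show ?thesis
  proof (simp add: vec_eq_iff matrix_vector_mul_assoc[symmetric] diag_mult relu_vec_def, intro allI)
    fix n
    show "v $ n * (X *v u) $ n = max 0 ((X *v u) $ n)"
      using assms(1)[rule_format, of n] h[of n] by auto
  qed
qed

lemma pattern_cone:
  "\<forall>n. (((2::real) *\<^sub>R diag_mat (\<chi> n. if (X *v w) $ n \<ge> 0 then 1 else 0) - mat 1) ** X *v w) $ n \<ge> 0"
  by (simp add: matrix_vector_mul_assoc[symmetric] twoD_mult)

lemma pattern_relu:
  "(diag_mat (\<chi> n. if (X *v w) $ n \<ge> 0 then 1 else 0) ** X) *v w = relu_vec (X *v w)"
  by (rule cone_relu[OF _ pattern_cone]) auto

lemma part2:
  fixes X :: "real^'d^'n" and lam :: "real^'n"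
  shows "(\<forall>u. norm u \<le> 1 \<longrightarrow> \<bar>lam \<bullet> relu_vec (X *v u)\<bar> \<le> 1)
   \<longleftrightarrow> (\<forall>D\<in>arrangements X. \<forall>u. norm u \<le> 1
           \<and> (\<forall>n. (((2::real) *\<^sub>R D - mat 1) ** X *v u) $ n \<ge> 0)
           \<longrightarrow> \<bar>lam \<bullet> ((D ** X) *v u)\<bar> \<le> 1)"
proof
  assume L: "\<forall>u. norm u \<le> 1 \<longrightarrow> \<bar>lam \<bullet> relu_vec (X *v u)\<bar> \<le> 1"
  show "\<forall>D\<in>arrangements X. \<forall>u. norm u \<le> 1
           \<and> (\<forall>n. (((2::real) *\<^sub>R D - mat 1) ** X *v u) $ n \<ge> 0)
           \<longrightarrow> \<bar>lam \<bullet> ((D ** X) *v u)\<bar> \<le> 1"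
  proof (intro ballI allI impI)
    fix D u assume D: "D \<in> arrangements X" and u: "norm u \<le> 1
           \<and> (\<forall>n. (((2::real) *\<^sub>R D - mat 1) ** X *v u) $ n \<ge> 0)"
    from arr_elem[OF D] obtain v where v: "D = diag_mat v" "\<forall>n. v$n = 0 \<or> v$n = 1" by blast
    have "(D ** X) *v u = relu_vec (X *v u)" using cone_relu[of v X u] v u by simp
    then show "\<bar>lam \<bullet> ((D ** X) *v u)\<bar> \<le> 1" using L u by simp
  qed
next
  assume R: "\<forall>D\<in>arrangements X. \<forall>u. norm u \<le> 1
           \<and> (\<forall>n. (((2::real) *\<^sub>R D - mat 1) ** X *v u) $ n \<ge> 0)
           \<longrightarrow> \<bar>lam \<bullet> ((D ** X) *v u)\<bar> \<le> 1"
  show "\<forall>u. norm u \<le> 1 \<longrightarrow> \<bar>lam \<bullet> relu_vec (X *v u)\<bar> \<le> 1"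
  proof (intro allI impI)
    fix u :: "real^'d" assume u: "norm u \<le> 1"
    have "\<bar>lam \<bullet> ((diag_mat (\<chi> n. if (X *v u) $ n \<ge> 0 then 1 else 0) ** X) *v u)\<bar> \<le> 1"
      by (rule R[rule_format, OF pattern_in_arr[of X u] conjI[OF u pattern_cone[of X u]]])
    then show "\<bar>lam \<bullet> relu_vec (X *v u)\<bar> \<le> 1" by (simp add: pattern_relu)
  qed
qed

lemma subdiff_norm_le: "s \<in> subdiff norm u \<Longrightarrow> norm (s::'a::real_inner) \<le> 1"
proof -
  assume "s \<in> subdiff norm u"
  then have "\<forall>z. norm z \<ge> norm u + s \<bullet> (z - u)" unfolding subdiff_def by simp
  then have "norm (u + s) \<ge> norm u + s \<bullet> ((u + s) - u)" by blast
  then have a: "norm (u + s) \<ge> norm u + s \<bullet> s" by simp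
  have b: "norm (u + s) \<le> norm u + norm s" by (rule norm_triangle_ineq)
  have c: "s \<bullet> s = norm s * norm s" by (simp add: power2_norm_eq_inner[symmetric] power2_eq_square)
  from a b c have "norm s * norm s \<le> norm s * 1" by simp
  then show "norm s \<le> 1"
    by (cases "norm s = 0") (auto simp: mult_le_cancel_left)
qed

lemma subdiff_normI:
  assumes "norm (s::'a::real_inner) \<le> 1" "s \<bullet> u = norm u"
  shows "s \<in> subdiff norm u"
  unfolding subdiff_def
proof (safe)
  fix z
  have "s \<bullet> z \<le> norm s * norm z" by (rule norm_cauchy_schwarz)
  also have "\<dots> \<le> norm z" using assms(1) by (simp add: mult_left_le_one_le)
  finally have "s \<bullet> z \<le> norm z" .
  moreover have "norm u + s \<bullet> (z - u) = s \<bullet> z" using assms(2) by (simp add: inner_diff_right)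
  ultimately show "norm u + s \<bullet> (z - u) \<le> norm z" by simp
qed



lemma mv_sum: "(M::real^'a^'b) *v (\<Sum>i\<in>S. f i) = (\<Sum>i\<in>S. M *v f i)"
  by (rule linear_sum[OF matrix_vector_mul_linear])

lemma inner_vec_sum: "(x::real^'n) \<bullet> y = (\<Sum>n\<in>UNIV. x$n * y$n)"
  by (simp add: inner_vec_def)

lemma group_lemma:
  fixes A :: "real^'d^'n" and w :: "'m::finite \<Rightarrow> real^'d" and a :: "'m \<Rightarrow> real"
    and s :: "real^'d" and z :: "real^'n" and P :: "'m \<Rightarrow> bool"
  assumes ns: "norm s \<le> 1" and z0: "\<forall>n. 0 \<le> z$n"
    and cone: "\<And>i n. P i \<Longrightarrow> 0 \<le> (A *v w i)$n"
    and sdot: "\<And>i. P i \<Longrightarrow> s \<bullet> w i = a i + z \<bullet> (A *v w i)"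
    and nw: "\<And>i. norm (w i) = \<bar>a i\<bar>"
  shows "s \<in> subdiff norm (\<Sum>i\<in>UNIV. (if P i then max 0 (a i) else 0) *\<^sub>R w i)
     \<and> (\<forall>n. 0 \<le> (A *v (\<Sum>i\<in>UNIV. (if P i then max 0 (a i) else 0) *\<^sub>R w i))$n)
     \<and> (\<forall>n. z$n * (A *v (\<Sum>i\<in>UNIV. (if P i then max 0 (a i) else 0) *\<^sub>R w i))$n = 0)"
proof -
  define c where "c i = (if P i then max 0 (a i) else 0)" for i
  define u where "u = (\<Sum>i\<in>UNIV. c i *\<^sub>R w i)"
  have c0: "0 \<le> c i" for i unfolding c_def by simp
  have cP: "c i \<noteq> 0 \<Longrightarrow> P i \<and> a i > 0 \<and> c i = a i" for i unfolding c_def by (auto split: if_splits)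
  have zc: "z$n * (A *v w i)$n = 0" if ci: "c i \<noteq> 0" for i n
  proof -
    from cP[OF ci] have Pi: "P i" and ai: "a i > 0" by auto
    have "s \<bullet> w i \<le> norm s * norm (w i)" by (rule norm_cauchy_schwarz)
    also have "\<dots> \<le> norm (w i)" using ns by (simp add: mult_left_le_one_le)
    finally have "s \<bullet> w i \<le> a i" using nw[of i] ai by simp
    then have "z \<bullet> (A *v w i) \<le> 0" using sdot[OF Pi] by simp
    moreover have nn: "\<forall>m\<in>UNIV. 0 \<le> z$m * (A *v w i)$m" using z0 cone[OF Pi] by simp
    ultimately have "(\<Sum>m\<in>UNIV. z$m * (A *v w i)$m) = 0"
      using sum_nonneg[of UNIV "\<lambda>m. z$m * (A *v w i)$m"] by (simp add: inner_vec_sum)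
    then show ?thesis using sum_nonneg_eq_0_iff[of UNIV "\<lambda>m. z$m * (A *v w i)$m"] nn by simp
  qed
  have sw: "s \<bullet> w i = norm (w i)" if ci: "c i \<noteq> 0" for i
  proof -
    from cP[OF ci] have Pi: "P i" and ai: "a i > 0" by auto
    have "z \<bullet> (A *v w i) = (\<Sum>m\<in>UNIV. z$m * (A *v w i)$m)" by (simp add: inner_vec_sum)
    also have "\<dots> = 0" using zc[OF ci] by (intro sum.neutral) blast
    finally have "z \<bullet> (A *v w i) = 0" .
    then show ?thesis using sdot[OF Pi] nw[of i] ai by simp
  qed
  have Au: "(A *v u)$n = (\<Sum>i\<in>UNIV. c i * (A *v w i)$n)" for n
    unfolding u_def mv_sum by (simp add: matrix_vector_mult_scaleR sum_component)
  have cone_u: "0 \<le> (A *v u)$n" for n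
    unfolding Au
  proof (rule sum_nonneg)
    fix i assume "i \<in> (UNIV::'m set)"
    show "0 \<le> c i * (A *v w i) $ n"
    proof (cases "c i = 0")
      case False then show ?thesis using cP[OF False] cone[of i n] by simp
    qed simp
  qed
  have comp_u: "z$n * (A *v u)$n = 0" for n
  proof -
    have "z$n * (A *v u)$n = (\<Sum>i\<in>UNIV. c i * (z$n * (A *v w i)$n))"
      unfolding Au by (simp add: sum_distrib_left algebra_simps)
    also have "\<dots> = 0"
    proof (rule sum.neutral, intro ballI)
      fix i assume "i \<in> (UNIV::'m set)"
      show "c i * (z $ n * (A *v w i) $ n) = 0"
        by (cases "c i = 0") (simp_all add: zc)
    qed
    finally show ?thesis .
  qed
  have su: "s \<bullet> u = (\<Sum>i\<in>UNIV. c i * norm (w i))"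
    unfolding u_def inner_sum_right
  proof (rule sum.cong[OF refl])
    fix i assume "i \<in> (UNIV::'m set)"
    show "s \<bullet> (c i *\<^sub>R w i) = c i * norm (w i)"
      by (cases "c i = 0") (simp_all add: sw)
  qed
  have "norm u \<le> (\<Sum>i\<in>UNIV. norm (c i *\<^sub>R w i))" unfolding u_def by (rule norm_sum)
  also have "\<dots> = (\<Sum>i\<in>UNIV. c i * norm (w i))" using c0 by simp
  finally have nu1: "norm u \<le> s \<bullet> u" using su by simp
  have "s \<bullet> u \<le> norm s * norm u" by (rule norm_cauchy_schwarz)
  also have "\<dots> \<le> norm u" using ns by (simp add: mult_left_le_one_le)
  finally have "s \<bullet> u = norm u" using nu1 by simp
  then have "s \<in> subdiff norm u" using ns by (rule subdiff_normI[rotated])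
  then show ?thesis using cone_u comp_u unfolding u_def c_def by blast
qed



lemma prod_col: "(X ** W1) $ n $ i = (X *v column i W1) $ n"
  by (simp add: matrix_matrix_mult_def matrix_vector_mult_def column_def)

lemma row_inner: "(X *v c) $ n = X $ n \<bullet> (c::real^'d)"
  by (simp add: matrix_vector_mult_def inner_vec_sum)

lemma out_sum: "relu_mat (X ** W1) *v w2 = (\<Sum>i\<in>UNIV. w2$i *\<^sub>R relu_vec (X *v column i W1))"
  by (simp add: vec_eq_iff matrix_vector_mult_def relu_mat_def relu_vec_def sum_component prod_col mult.commute)

lemma out_comp: "(relu_mat (X ** W1)) $ n \<bullet> w2 = (relu_mat (X ** W1) *v w2) $ n"
  by (simp add: matrix_vector_mult_def inner_vec_sum)

lemma w2_comp:
  assumes "w2 = transpose (relu_mat (X ** W1)) *v lam"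
  shows "w2 $ i = lam \<bullet> relu_vec (X *v column i W1)"
  using assms
  by (simp add: transpose_def matrix_vector_mult_def relu_mat_def relu_vec_def prod_col inner_vec_sum mult.commute)

lemma neuron_norm:
  fixes X :: "real^'d^'n" and W1 :: "real^'m^'d" and g :: "'n \<Rightarrow> real"
  assumes w2i: "w2 $ i = lam \<bullet> relu_vec (X *v column i W1)"
    and g: "\<forall>n. (X $ n \<bullet> column i W1 > 0 \<longrightarrow> g n = 1)
             \<and> (X $ n \<bullet> column i W1 < 0 \<longrightarrow> g n = 0)
             \<and> (X $ n \<bullet> column i W1 = 0 \<longrightarrow> g n \<in> {0, 1})"
    and col: "column i W1 = w2 $ i *\<^sub>R (\<Sum>n\<in>UNIV. (lam $ n * g n) *\<^sub>R X $ n)"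
  shows "norm (column i W1) = \<bar>w2 $ i\<bar>"
proof -
  define c where "c = column i W1"
  have gx: "g n * (X $ n \<bullet> c) = max 0 ((X *v c) $ n)" for n
    using g[rule_format, of n] unfolding c_def row_inner by (cases "X $ n \<bullet> column i W1 > 0"; cases "X $ n \<bullet> column i W1 < 0") auto
  have "c \<bullet> c = w2 $ i * (\<Sum>n\<in>UNIV. lam $ n * (g n * (X $ n \<bullet> c)))"
    apply (subst (1) c_def) unfolding col
    by (simp add: inner_sum_left algebra_simps)
  also have "\<dots> = w2 $ i * (lam \<bullet> relu_vec (X *v c))"
    unfolding gx by (simp add: inner_vec_def relu_vec_def)
  also have "\<dots> = (w2 $ i)^2" using w2i unfolding c_def by (simp add: power2_eq_square)
  finally have "norm c ^ 2 = (w2 $ i)^2" by (simp add: power2_norm_eq_inner)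
  then show ?thesis unfolding c_def by (metis abs_norm_cancel power2_eq_iff_nonneg abs_ge_zero norm_ge_zero real_sqrt_abs real_sqrt_pow2_iff power2_abs)
qed



lemma gen_dot:
  fixes X :: "real^'d^'n"
  assumes "D = diag_mat v"
  shows "(transpose X *v (D *v lam) + transpose X *v (((2::real) *\<^sub>R D - mat 1) *v z)) \<bullet> u
          = lam \<bullet> ((D ** X) *v u) + z \<bullet> ((((2::real) *\<^sub>R D - mat 1) ** X) *v u)"
    and "(- (transpose X *v (D *v lam)) + transpose X *v (((2::real) *\<^sub>R D - mat 1) *v z)) \<bullet> u
          = - (lam \<bullet> ((D ** X) *v u)) + z \<bullet> ((((2::real) *\<^sub>R D - mat 1) ** X) *v u)"
  unfolding assms
  by (simp_all only: inner_add_left inner_minus_left sym_dot[OF transpose_diag] sym_dot[OF transpose_twoD])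

lemma nonneg_dot: "\<forall>n. 0 \<le> (z::real^'n)$n \<Longrightarrow> \<forall>n. 0 \<le> w$n \<Longrightarrow> 0 \<le> z \<bullet> w"
  unfolding inner_vec_sum by (intro sum_nonneg) simp

lemma transpose_cone:
  "transpose (((2::real) *\<^sub>R diag_mat v - mat 1) ** (X::real^'d^'n)) *v z
     = transpose X *v (((2::real) *\<^sub>R diag_mat v - mat 1) *v z)"
  by (simp only: matrix_transpose_mul transpose_twoD matrix_vector_mul_assoc[symmetric])

lemma dual_exists:
  fixes X :: "real^'d^'n" and c :: "real^'d"
  assumes D: "D = diag_mat v"
    and H: "\<And>u. norm u \<le> 1 \<Longrightarrow> (\<forall>n. ((((2::real) *\<^sub>R D - mat 1) ** X) *v u)$n \<ge> 0) \<Longrightarrow> c \<bullet> u \<le> 1"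
  shows "\<exists>z. (\<forall>n. z$n \<ge> 0) \<and> norm (c + transpose X *v (((2::real) *\<^sub>R D - mat 1) *v z)) \<le> 1"
  using cone_dual[of "((2::real) *\<^sub>R D - mat 1) ** X" c] H unfolding D transpose_cone by blast



theorem theorem3:
  fixes X :: "real^'d^'n" and y :: "real^'n" and W1 :: "real^'m^'d"
    and w2 :: "real^'m" and lam :: "real^'n"
  assumes y_pm: "\<forall>n. y $ n \<in> {-1, 1}"
    and kkt: "nonconvex_KKT X y W1 w2 lam"
  shows "((\<exists>u u' z z'.
             (\<Sum>D\<in>arrangements X. (D ** X) *v (u' D - u D)) = relu_mat (X ** W1) *v w2
           \<and> convex_KKT X y u u' z z' lam)
          \<longleftrightarrow> (\<forall>u. norm u \<le> 1 \<longrightarrow> \<bar>lam \<bullet> relu_vec (X *v u)\<bar> \<le> 1))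
       \<and> ((\<forall>u. norm u \<le> 1 \<longrightarrow> \<bar>lam \<bullet> relu_vec (X *v u)\<bar> \<le> 1)
          \<longleftrightarrow> (\<forall>D\<in>arrangements X. \<forall>u. norm u \<le> 1
                 \<and> (\<forall>n. (((2::real) *\<^sub>R D - mat 1) ** X *v u) $ n \<ge> 0)
                 \<longrightarrow> \<bar>lam \<bullet> ((D ** X) *v u)\<bar> \<le> 1))"
proof -
  let ?P = "arrangements X"
  let ?DF = "\<forall>u. norm u \<le> 1 \<longrightarrow> \<bar>lam \<bullet> relu_vec (X *v u)\<bar> \<le> 1"
  let ?PD = "\<forall>D\<in>arrangements X. \<forall>u. norm u \<le> 1
                 \<and> (\<forall>n. (((2::real) *\<^sub>R D - mat 1) ** X *v u) $ n \<ge> 0)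
                 \<longrightarrow> \<bar>lam \<bullet> ((D ** X) *v u)\<bar> \<le> 1"
  have K1: "\<forall>n. (diag_mat y *v lam) $ n \<ge> 0"
    and K2: "\<forall>n. (diag_mat y *v (relu_mat (X ** W1) *v w2)) $ n \<ge> 1"
    and K3: "\<forall>n. lam $ n * (y $ n * ((relu_mat (X ** W1)) $ n \<bullet> w2) - 1) = 0"
    and K4: "w2 = transpose (relu_mat (X ** W1)) *v lam"
    and K5: "\<forall>i. \<exists>g :: 'n \<Rightarrow> real.
          (\<forall>n. (X $ n \<bullet> column i W1 > 0 \<longrightarrow> g n = 1)
             \<and> (X $ n \<bullet> column i W1 < 0 \<longrightarrow> g n = 0)
             \<and> (X $ n \<bullet> column i W1 = 0 \<longrightarrow> g n \<in> {0, 1}))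
        \<and> column i W1 = w2 $ i *\<^sub>R (\<Sum>n\<in>UNIV. (lam $ n * g n) *\<^sub>R X $ n)"
    using kkt unfolding nonconvex_KKT_def by blast+
  have w2c: "w2 $ i = lam \<bullet> relu_vec (X *v column i W1)" for i by (rule w2_comp[OF K4])
  have nrm: "norm (column i W1) = \<bar>w2 $ i\<bar>" for i
  proof -
    from K5 obtain g :: "'n \<Rightarrow> real" where
      "(\<forall>n. (X $ n \<bullet> column i W1 > 0 \<longrightarrow> g n = 1)
             \<and> (X $ n \<bullet> column i W1 < 0 \<longrightarrow> g n = 0)
             \<and> (X $ n \<bullet> column i W1 = 0 \<longrightarrow> g n \<in> {0, 1}))"
      "column i W1 = w2 $ i *\<^sub>R (\<Sum>n\<in>UNIV. (lam $ n * g n) *\<^sub>R X $ n)" by blast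
    then show ?thesis by (intro neuron_norm[OF w2c]) 
  qed
  have fwd: ?DF if "\<exists>u u' z z'.
             (\<Sum>D\<in>arrangements X. (D ** X) *v (u' D - u D)) = relu_mat (X ** W1) *v w2
           \<and> convex_KKT X y u u' z z' lam"
  proof -
    from that obtain u u' z z' where conv: "convex_KKT X y u u' z z' lam" by blast
    have Z: "\<forall>D\<in>?P. \<forall>n. z D $ n \<ge> 0 \<and> z' D $ n \<ge> 0"
      and S1: "\<forall>D\<in>?P. transpose X *v (D *v lam) + transpose X *v (((2::real) *\<^sub>R D - mat 1) *v z' D)
                 \<in> subdiff norm (u' D)"
      and S2: "\<forall>D\<in>?P. - (transpose X *v (D *v lam)) + transpose X *v (((2::real) *\<^sub>R D - mat 1) *v z D)
                 \<in> subdiff norm (u D)"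
      using conv unfolding convex_KKT_def Let_def by blast+
    have ?PD
    proof (intro ballI allI impI)
      fix D and w :: "real^'d"
      assume DP: "D \<in> ?P" and hw: "norm w \<le> 1 \<and> (\<forall>n. (((2::real) *\<^sub>R D - mat 1) ** X *v w) $ n \<ge> 0)"
      from arr_elem[OF DP] obtain v where Dv: "D = diag_mat v" by blast
      have c1: "0 \<le> z' D \<bullet> ((((2::real) *\<^sub>R D - mat 1) ** X) *v w)"
        using Z DP hw by (intro nonneg_dot) auto
      have c2: "0 \<le> z D \<bullet> ((((2::real) *\<^sub>R D - mat 1) ** X) *v w)"
        using Z DP hw by (intro nonneg_dot) auto
      have le1: "s \<bullet> w \<le> 1" if "s \<in> subdiff norm x" for s x
      proof -
        have "s \<bullet> w \<le> norm s * norm w" by (rule norm_cauchy_schwarz)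
        also have "\<dots> \<le> 1" using subdiff_norm_le[OF that] hw
          by (metis mult_le_one norm_ge_zero)
        finally show ?thesis .
      qed
      have a1: "lam \<bullet> ((D ** X) *v w) \<le> 1"
        using le1[OF S1[rule_format, OF DP]] gen_dot(1)[OF Dv, of X lam "z' D" w] c1 by linarith
      have a2: "- (lam \<bullet> ((D ** X) *v w)) \<le> 1"
        using le1[OF S2[rule_format, OF DP]] gen_dot(2)[OF Dv, of X lam "z D" w] c2 by linarith
      show "\<bar>lam \<bullet> ((D ** X) *v w)\<bar> \<le> 1" using a1 a2 by linarith
    qed
    then show ?thesis using part2[of lam X] by blast
  qed
  have bwd: "\<exists>u u' z z'.
             (\<Sum>D\<in>arrangements X. (D ** X) *v (u' D - u D)) = relu_mat (X ** W1) *v w2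
           \<and> convex_KKT X y u u' z z' lam" if DF: ?DF
  proof -
    have PD: ?PD using DF part2[of lam X] by blast
    define Di where "Di i = diag_mat (\<chi> n. if (X *v column i W1) $ n \<ge> 0 then 1 else (0::real))" for i
    have DiP: "Di i \<in> ?P" for i unfolding Di_def by (rule pattern_in_arr)
    define zP where "zP D = (SOME z. (\<forall>n. z$n \<ge> 0) \<and> norm (transpose X *v (D *v lam)
         + transpose X *v (((2::real) *\<^sub>R D - mat 1) *v z)) \<le> 1)" for D
    define zM where "zM D = (SOME z. (\<forall>n. z$n \<ge> 0) \<and> norm (- (transpose X *v (D *v lam))
         + transpose X *v (((2::real) *\<^sub>R D - mat 1) *v z)) \<le> 1)" for D
    have zPex: "(\<forall>n. zP D $n \<ge> 0) \<and> norm (transpose X *v (D *v lam)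
         + transpose X *v (((2::real) *\<^sub>R D - mat 1) *v zP D)) \<le> 1" if DP: "D \<in> ?P" for D
    proof -
      from arr_elem[OF DP] obtain v where Dv: "D = diag_mat v" by blast
      have "\<exists>z. (\<forall>n. z$n \<ge> 0) \<and> norm (transpose X *v (D *v lam)
         + transpose X *v (((2::real) *\<^sub>R D - mat 1) *v z)) \<le> 1"
      proof (rule dual_exists[OF Dv])
        fix u :: "real^'d" assume "norm u \<le> 1" "\<forall>n. ((((2::real) *\<^sub>R D - mat 1) ** X) *v u)$n \<ge> 0"
        then have "\<bar>lam \<bullet> ((D ** X) *v u)\<bar> \<le> 1" using PD DP by blast
        moreover have "(transpose X *v (D *v lam)) \<bullet> u = lam \<bullet> ((D ** X) *v u)"
          unfolding Dv by (rule sym_dot[OF transpose_diag])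
        ultimately show "(transpose X *v (D *v lam)) \<bullet> u \<le> 1" by simp
      qed
      then show ?thesis unfolding zP_def by (rule someI_ex)
    qed
    have zMex: "(\<forall>n. zM D $n \<ge> 0) \<and> norm (- (transpose X *v (D *v lam))
         + transpose X *v (((2::real) *\<^sub>R D - mat 1) *v zM D)) \<le> 1" if DP: "D \<in> ?P" for D
    proof -
      from arr_elem[OF DP] obtain v where Dv: "D = diag_mat v" by blast
      have "\<exists>z. (\<forall>n. z$n \<ge> 0) \<and> norm (- (transpose X *v (D *v lam))
         + transpose X *v (((2::real) *\<^sub>R D - mat 1) *v z)) \<le> 1"
      proof (rule dual_exists[OF Dv])
        fix u :: "real^'d" assume "norm u \<le> 1" "\<forall>n. ((((2::real) *\<^sub>R D - mat 1) ** X) *v u)$n \<ge> 0"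
        then have "\<bar>lam \<bullet> ((D ** X) *v u)\<bar> \<le> 1" using PD DP by blast
        moreover have "(transpose X *v (D *v lam)) \<bullet> u = lam \<bullet> ((D ** X) *v u)"
          unfolding Dv by (rule sym_dot[OF transpose_diag])
        ultimately show "(- (transpose X *v (D *v lam))) \<bullet> u \<le> 1" by simp
      qed
      then show ?thesis unfolding zM_def by (rule someI_ex)
    qed
    define uP where "uP D = (\<Sum>i\<in>UNIV. (if Di i = D then max 0 (w2 $ i) else 0) *\<^sub>R column i W1)" for D
    define uM where "uM D = (\<Sum>i\<in>UNIV. (if Di i = D then max 0 (- w2 $ i) else 0) *\<^sub>R column i W1)" for D
    have lamDi: "lam \<bullet> ((Di i ** X) *v column i W1) = w2 $ i" for i
      unfolding Di_def pattern_relu w2c ..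
    have coneDi: "\<forall>n. 0 \<le> ((((2::real) *\<^sub>R Di i - mat 1) ** X) *v column i W1) $ n" for i
      unfolding Di_def by (rule pattern_cone)
    have GP: "(transpose X *v (D *v lam) + transpose X *v (((2::real) *\<^sub>R D - mat 1) *v zP D))
                 \<in> subdiff norm (uP D)
        \<and> (\<forall>n. 0 \<le> ((((2::real) *\<^sub>R D - mat 1) ** X) *v uP D)$n)
        \<and> (\<forall>n. zP D $n * ((((2::real) *\<^sub>R D - mat 1) ** X) *v uP D)$n = 0)" if DP: "D \<in> ?P" for D
    proof -
      from arr_elem[OF DP] obtain v where Dv: "D = diag_mat v" by blast
      show ?thesis unfolding uP_def
      proof (rule group_lemma)
        show "norm (transpose X *v (D *v lam) + transpose X *v (((2::real) *\<^sub>R D - mat 1) *v zP D)) \<le> 1"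
          using zPex[OF DP] by blast
        show "\<forall>n. 0 \<le> zP D $ n" using zPex[OF DP] by blast
        show "0 \<le> ((((2::real) *\<^sub>R D - mat 1) ** X) *v column i W1) $ n" if "Di i = D" for i n
          using coneDi[of i] that by blast
        show "norm (column i W1) = \<bar>w2 $ i\<bar>" for i by (rule nrm)
        show "(transpose X *v (D *v lam) + transpose X *v (((2::real) *\<^sub>R D - mat 1) *v zP D)) \<bullet> column i W1
              = w2 $ i + zP D \<bullet> ((((2::real) *\<^sub>R D - mat 1) ** X) *v column i W1)" if "Di i = D" for i
          unfolding gen_dot(1)[OF Dv] using lamDi[of i] that by simp
      qed
    qed
    have GM: "(- (transpose X *v (D *v lam)) + transpose X *v (((2::real) *\<^sub>R D - mat 1) *v zM D))
                 \<in> subdiff norm (uM D)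
        \<and> (\<forall>n. 0 \<le> ((((2::real) *\<^sub>R D - mat 1) ** X) *v uM D)$n)
        \<and> (\<forall>n. zM D $n * ((((2::real) *\<^sub>R D - mat 1) ** X) *v uM D)$n = 0)" if DP: "D \<in> ?P" for D
    proof -
      from arr_elem[OF DP] obtain v where Dv: "D = diag_mat v" by blast
      show ?thesis unfolding uM_def
      proof (rule group_lemma)
        show "norm (- (transpose X *v (D *v lam)) + transpose X *v (((2::real) *\<^sub>R D - mat 1) *v zM D)) \<le> 1"
          using zMex[OF DP] by blast
        show "\<forall>n. 0 \<le> zM D $ n" using zMex[OF DP] by blast
        show "0 \<le> ((((2::real) *\<^sub>R D - mat 1) ** X) *v column i W1) $ n" if "Di i = D" for i n
          using coneDi[of i] that by blast
        show "norm (column i W1) = \<bar>- w2 $ i\<bar>" for i using nrm[of i] by simp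
        show "(- (transpose X *v (D *v lam)) + transpose X *v (((2::real) *\<^sub>R D - mat 1) *v zM D)) \<bullet> column i W1
              = - w2 $ i + zM D \<bullet> ((((2::real) *\<^sub>R D - mat 1) ** X) *v column i W1)" if "Di i = D" for i
          unfolding gen_dot(2)[OF Dv] using lamDi[of i] that by simp
      qed
    qed
    have OUT: "(\<Sum>D\<in>?P. (D ** X) *v (uP D - uM D)) = relu_mat (X ** W1) *v w2"
    proof -
      have diff: "uP D - uM D = (\<Sum>i\<in>UNIV. (if Di i = D then w2 $ i else 0) *\<^sub>R column i W1)" for D
        unfolding uP_def uM_def sum_subtractf[symmetric]
        by (intro sum.cong refl) (auto simp: scaleR_left_diff_distrib[symmetric] max_def)
      have "(\<Sum>D\<in>?P. (D ** X) *v (uP D - uM D))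
            = (\<Sum>D\<in>?P. \<Sum>i\<in>UNIV. (if Di i = D then w2 $ i *\<^sub>R ((D ** X) *v column i W1) else 0))"
        unfolding diff mv_sum by (intro sum.cong refl) (simp add: matrix_vector_mult_scaleR)
      also have "\<dots> = (\<Sum>i\<in>UNIV. \<Sum>D\<in>?P. (if Di i = D then w2 $ i *\<^sub>R ((D ** X) *v column i W1) else 0))"
        by (rule sum.swap)
      also have "\<dots> = (\<Sum>i\<in>UNIV. w2 $ i *\<^sub>R ((Di i ** X) *v column i W1))"
        using arr_finite[of X] DiP by (simp add: sum.delta)
      also have "\<dots> = (\<Sum>i\<in>UNIV. w2 $ i *\<^sub>R relu_vec (X *v column i W1))"
        unfolding Di_def pattern_relu ..
      finally show ?thesis by (simp add: out_sum)
    qed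
    have "convex_KKT X y uM uP zM zP lam"
      unfolding convex_KKT_def Let_def OUT
      using K1 K2 K3 GP GM zPex zMex by (simp add: out_comp)
    then show ?thesis using OUT by blast
  qed
  show ?thesis using fwd bwd part2[of lam X] by blast
qed


end
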